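(* Let $k\subseteq K$ be algebraically closed fields, $X=\mathbb{A}^s$, $B=\mathbb{A}^t$, $Y\subseteq X\times B$ a constructible subset, and $A\subseteq X(K)$. Suppose there exist $\alpha,\beta\in A$ with the following property: for every $m\in\mathbb{N}$ and $i\le m$, letting $p^{(m)}_i\in X^m(K)$ be the $m$-tuple $(\alpha,\dots,\alpha,\beta,\alpha,\dots,\alpha)$ with $\beta$ in the $i$th place, and $P^{(m)}_i$ the $k$-Zariski closure of $\{p^{(m)}_i\}$, we have $p^{(m)}_i\notin P^{(m)}_j$ for all $i\neq j$. Then there are a natural number $n$ and a $k$-constructible set $Z\subseteq X\times X^n$ such that for every $b\in B(K)$ there is $a\in A^n$ with $Y_b(K)\cap A=Z_a(K)\cap A$.
   Context: For a set $Y\subseteq X\times B$ and $b\in B$, $Y_b=\{x\in X:(x,b)\in Y\}$ denotes the fibre; similarly $Z_a=\{x\in X:(x,a)\in Z\}$ for $a\in X^n$. The $k$-Zariski closure of a point is the smallest Zariski-closed set defined over $k$ containing it. *)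

theory Defs
  imports "HOL-Computational_Algebra.Polynomial"
begin

definition aspace :: "nat \<Rightarrow> 'a list set" where
  "aspace N = {x. length x = N}"

datatype 'a mpexpr = Var nat | Const 'a | Add "'a mpexpr" "'a mpexpr"
  | Mul "'a mpexpr" "'a mpexpr" | Neg "'a mpexpr"

fun mpeval :: "'a::comm_ring_1 mpexpr \<Rightarrow> 'a list \<Rightarrow> 'a" where
  "mpeval (Var i) x = (if i < length x then x ! i else 0)"
| "mpeval (Const c) x = c"
| "mpeval (Add p q) x = mpeval p x + mpeval q x"
| "mpeval (Mul p q) x = mpeval p x * mpeval q x"
| "mpeval (Neg p) x = - mpeval p x"

fun coeffs_in :: "'a set \<Rightarrow> 'a mpexpr \<Rightarrow> bool" where
  "coeffs_in k (Var i) = True"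
| "coeffs_in k (Const c) = (c \<in> k)"
| "coeffs_in k (Add p q) = (coeffs_in k p \<and> coeffs_in k q)"
| "coeffs_in k (Mul p q) = (coeffs_in k p \<and> coeffs_in k q)"
| "coeffs_in k (Neg p) = coeffs_in k p"

definition zariski_closed :: "'a::comm_ring_1 set \<Rightarrow> nat \<Rightarrow> 'a list set \<Rightarrow> bool" where
  "zariski_closed k N S \<longleftrightarrow> (\<exists>F. finite F \<and> (\<forall>p\<in>F. coeffs_in k p) \<and>
      S = {x \<in> aspace N. \<forall>p\<in>F. mpeval p x = 0})"

inductive constructible :: "'a::comm_ring_1 set \<Rightarrow> nat \<Rightarrow> 'a list set \<Rightarrow> bool"
  for k N where
  closed: "zariski_closed k N S \<Longrightarrow> constructible k N S"
| compl: "constructible k N S \<Longrightarrow> constructible k N (aspace N - S)"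
| union: "constructible k N S \<Longrightarrow> constructible k N T \<Longrightarrow> constructible k N (S \<union> T)"

definition zariski_closure_pt :: "'a::comm_ring_1 set \<Rightarrow> nat \<Rightarrow> 'a list \<Rightarrow> 'a list set" where
  "zariski_closure_pt k N p = \<Inter>{C. zariski_closed k N C \<and> p \<in> C}"

definition subfield :: "'a::field set \<Rightarrow> bool" where
  "subfield k \<longleftrightarrow> 0 \<in> k \<and> 1 \<in> k \<and> (\<forall>x\<in>k. \<forall>y\<in>k. x + y \<in> k \<and> x * y \<in> k)
     \<and> (\<forall>x\<in>k. - x \<in> k \<and> inverse x \<in> k)"

definition alg_closed_in :: "'a::field set \<Rightarrow> bool" where
  "alg_closed_in k \<longleftrightarrow> (\<forall>p :: 'a poly. set (coeffs p) \<subseteq> k \<and> degree p > 0 \<longrightarrow>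
      (\<exists>x\<in>k. poly p x = 0))"

definition fibre :: "nat \<Rightarrow> 'a list set \<Rightarrow> 'a list \<Rightarrow> 'a list set" where
  "fibre s Y b = {x \<in> aspace s. x @ b \<in> Y}"

text \<open>The m-tuple (alpha,...,alpha,beta,alpha,...,alpha) with beta in place i (1-based),
  as a point of X^m.\<close>
definition ptuple :: "nat \<Rightarrow> nat \<Rightarrow> 'a list \<Rightarrow> 'a list \<Rightarrow> 'a list" where
  "ptuple m i \<alpha> \<beta> = concat (map (\<lambda>j. if j = i then \<beta> else \<alpha>) [1..<Suc m])"

end

theory Submission
  imports Defs "Jordan_Normal_Form.Determinant"
begin

definition kp :: "'a::comm_ring_1 set \<Rightarrow> nat \<Rightarrow> ('a list \<Rightarrow> 'a) \<Rightarrow> bool" where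
  "kp k N f \<longleftrightarrow> (\<exists>p. coeffs_in k p \<and> (\<forall>y\<in>aspace N. mpeval p y = f y))"

lemma kp_cong: "kp k N f \<Longrightarrow> (\<And>y. y \<in> aspace N \<Longrightarrow> f y = f' y) \<Longrightarrow> kp k N f'"
  unfolding kp_def by metis

lemma kp_const: "c \<in> k \<Longrightarrow> kp k N (\<lambda>y. c)"
  unfolding kp_def by (rule exI[of _ "Const c"]) auto

lemma kp_var: "i < N \<Longrightarrow> kp k N (\<lambda>y. y ! i)"
  unfolding kp_def aspace_def by (rule exI[of _ "Var i"]) auto

lemma kp_add: "kp k N f \<Longrightarrow> kp k N g \<Longrightarrow> kp k N (\<lambda>y. f y + g y)"
proof -
  assume "kp k N f" "kp k N g"
  then obtain p q where "coeffs_in k p" "\<forall>y\<in>aspace N. mpeval p y = f y"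
    "coeffs_in k q" "\<forall>y\<in>aspace N. mpeval q y = g y" unfolding kp_def by blast
  then show ?thesis unfolding kp_def by (intro exI[of _ "Add p q"]) auto
qed

lemma kp_mul: "kp k N f \<Longrightarrow> kp k N g \<Longrightarrow> kp k N (\<lambda>y. f y * g y)"
proof -
  assume "kp k N f" "kp k N g"
  then obtain p q where "coeffs_in k p" "\<forall>y\<in>aspace N. mpeval p y = f y"
    "coeffs_in k q" "\<forall>y\<in>aspace N. mpeval q y = g y" unfolding kp_def by blast
  then show ?thesis unfolding kp_def by (intro exI[of _ "Mul p q"]) auto
qed

lemma kp_neg: "kp k N f \<Longrightarrow> kp k N (\<lambda>y. - f y)"
proof -
  assume "kp k N f"
  then obtain p where "coeffs_in k p" "\<forall>y\<in>aspace N. mpeval p y = f y"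
    unfolding kp_def by blast
  then show ?thesis unfolding kp_def by (intro exI[of _ "Neg p"]) auto
qed

lemma kp_diff: "kp k N f \<Longrightarrow> kp k N g \<Longrightarrow> kp k N (\<lambda>y. f y - g y)"
  using kp_add[OF _ kp_neg, of k N f g] by simp

lemma kp_sum: "finite X \<Longrightarrow> 0 \<in> k \<Longrightarrow> (\<And>x. x \<in> X \<Longrightarrow> kp k N (f x)) \<Longrightarrow>
   kp k N (\<lambda>y. \<Sum>x\<in>X. f x y)"
proof (induction X rule: finite_induct)
  case empty then show ?case using kp_const[of 0 k N] by simp
next
  case (insert x F)
  then show ?case using kp_add[of k N "f x" "\<lambda>y. \<Sum>x\<in>F. f x y"] by simp
qed

lemma kp_prod: "finite X \<Longrightarrow> 1 \<in> k \<Longrightarrow> (\<And>x. x \<in> X \<Longrightarrow> kp k N (f x)) \<Longrightarrow>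
   kp k N (\<lambda>y. \<Prod>x\<in>X. f x y)"
proof (induction X rule: finite_induct)
  case empty then show ?case using kp_const[of 1 k N] by simp
next
  case (insert x F)
  then show ?case using kp_mul[of k N "f x" "\<lambda>y. \<Prod>x\<in>F. f x y"] by simp
qed

lemma kp_sub: "coeffs_in k g \<Longrightarrow> 0 \<in> k \<Longrightarrow> (\<And>i. i < L \<Longrightarrow> \<rho> i < N) \<Longrightarrow>
   kp k N (\<lambda>y. mpeval g (map (\<lambda>i. y ! \<rho> i) [0..<L]))"
proof (induction g)
  case (Var j)
  show ?case
  proof (cases "j < L")
    case True
    then show ?thesis using kp_var[of "\<rho> j" N k] Var by simp
  next
    case False
    then show ?thesis using kp_const[of 0 k N] Var by simp
  qed
next
  case (Const c) then show ?case using kp_const[of c k N] by simp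
next
  case (Add p q) then show ?case using kp_add[of k N] by simp
next
  case (Mul p q) then show ?case using kp_mul[of k N] by simp
next
  case (Neg p) then show ?case using kp_neg[of k N] by simp
qed

lemma kp_det:
  assumes "\<And>i j. i < n \<Longrightarrow> j < n \<Longrightarrow> kp k N (f i j)" and "0 \<in> k" "1 \<in> k" "-1 \<in> k"
  shows "kp k N (\<lambda>y. det (mat n n (\<lambda>(i,j). f i j y)))"
proof -
  have e: "det (mat n n (\<lambda>(i,j). f i j y)) =
    (\<Sum>p\<in>{p. p permutes {0..<n}}. signof p * (\<Prod>i=0..<n. f i (p i) y))" for y
    by (subst det_def'[of _ n]) (auto intro!: sum.cong prod.cong simp: permutes_in_image)
  have sg: "kp k N (\<lambda>y. signof p :: 'a)" for p
  proof (cases "sign p = (1::int)")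
    case True then show ?thesis using kp_const[of 1 k N] assms by simp
  next
    case False then have "sign p = (-1::int)" by (simp add: sign_def split: if_splits)
    then show ?thesis using kp_const[of "-1" k N] assms by simp
  qed
  show ?thesis
    unfolding e
    apply (rule kp_sum)
      apply (simp add: finite_permutations)
     apply (rule assms)
    apply (rule kp_mul[OF sg])
    apply (rule kp_prod)
      apply simp
     apply (rule assms)
    apply (rule assms(1))
     apply simp
    apply (simp add: permutes_in_image)
    done
qed

lemma cons_sub: "constructible k N S \<Longrightarrow> S \<subseteq> aspace N"
  by (induction rule: constructible.induct) (auto simp: zariski_closed_def)

lemma cons_univ: "constructible k N (aspace N)"
  by (rule constructible.closed) (auto simp: zariski_closed_def intro!: exI[of _ "{}"])

lemma cons_zero: "kp k N f \<Longrightarrow> constructible k N {y \<in> aspace N. f y = 0}"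
  unfolding kp_def
  apply (elim exE conjE)
  apply (rule constructible.closed)
  apply (unfold zariski_closed_def)
  subgoal for p by (rule exI[of _ "{p}"]) auto
  done

lemma cons_not: "constructible k N {y \<in> aspace N. P y} \<Longrightarrow> constructible k N {y \<in> aspace N. \<not> P y}"
proof -
  assume "constructible k N {y \<in> aspace N. P y}"
  moreover have "aspace N - {y \<in> aspace N. P y} = {y \<in> aspace N. \<not> P y}" by blast
  ultimately show ?thesis using constructible.compl by metis
qed

lemma cons_disj: "constructible k N {y \<in> aspace N. P y} \<Longrightarrow> constructible k N {y \<in> aspace N. Q y} \<Longrightarrow>
   constructible k N {y \<in> aspace N. P y \<or> Q y}"
proof -
  assume a: "constructible k N {y \<in> aspace N. P y}" "constructible k N {y \<in> aspace N. Q y}"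
  have "{y \<in> aspace N. P y \<or> Q y} = {y \<in> aspace N. P y} \<union> {y \<in> aspace N. Q y}" by auto
  then show ?thesis using constructible.union[OF a] by simp
qed

lemma cons_conj: "constructible k N {y \<in> aspace N. P y} \<Longrightarrow> constructible k N {y \<in> aspace N. Q y} \<Longrightarrow>
   constructible k N {y \<in> aspace N. P y \<and> Q y}"
proof -
  assume "constructible k N {y \<in> aspace N. P y}" "constructible k N {y \<in> aspace N. Q y}"
  then have "constructible k N {y \<in> aspace N. \<not> (\<not> P y \<or> \<not> Q y)}"
    by (intro cons_not cons_disj)
  then show ?thesis by simp
qed

lemma cons_false: "constructible k N {y \<in> aspace N. False}"
  using cons_not[of k N "\<lambda>y. True"] cons_univ[of k N] by simp

lemma cons_ex: "finite X \<Longrightarrow> (\<And>x. x \<in> X \<Longrightarrow> constructible k N {y \<in> aspace N. P x y}) \<Longrightarrow>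
   constructible k N {y \<in> aspace N. \<exists>x\<in>X. P x y}"
proof (induction X rule: finite_induct)
  case empty then show ?case using cons_false by simp
next
  case (insert x F)
  then have "constructible k N {y \<in> aspace N. P x y \<or> (\<exists>x\<in>F. P x y)}"
    by (intro cons_disj) auto
  then show ?case by simp
qed

lemma cons_all: "finite X \<Longrightarrow> (\<And>x. x \<in> X \<Longrightarrow> constructible k N {y \<in> aspace N. P x y}) \<Longrightarrow>
   constructible k N {y \<in> aspace N. \<forall>x\<in>X. P x y}"
proof -
  assume "finite X" "\<And>x. x \<in> X \<Longrightarrow> constructible k N {y \<in> aspace N. P x y}"
  then have "constructible k N {y \<in> aspace N. \<not> (\<exists>x\<in>X. \<not> P x y)}"
    by (intro cons_not cons_ex) auto
  then show ?thesis by simp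
qed

lemma cons_pre:
  assumes "constructible k N S" "\<And>i. i < N \<Longrightarrow> \<rho> i < N'" "0 \<in> k"
  shows "constructible k N' {y \<in> aspace N'. map (\<lambda>i. y ! \<rho> i) [0..<N] \<in> S}"
  using assms(1)
proof (induction rule: constructible.induct)
  case (closed S)
  then obtain F where F: "finite F" "\<forall>p\<in>F. coeffs_in k p" "S = {x \<in> aspace N. \<forall>p\<in>F. mpeval p x = 0}"
    unfolding zariski_closed_def by blast
  have "constructible k N' {y \<in> aspace N'. \<forall>p\<in>F. mpeval p (map (\<lambda>i. y ! \<rho> i) [0..<N]) = 0}"
    using F assms by (intro cons_all cons_zero kp_sub) auto
  moreover have "map (\<lambda>i. y ! \<rho> i) [0..<N] \<in> aspace N" for y by (simp add: aspace_def)
  ultimately show ?case using F(3) by (simp add: aspace_def)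
next
  case (compl S)
  have "map (\<lambda>i. y ! \<rho> i) [0..<N] \<in> aspace N" for y by (simp add: aspace_def)
  then show ?case using cons_not[OF compl.IH] by (simp add: aspace_def)
next
  case (union S T)
  then show ?case using cons_disj[OF union.IH] by simp
qed

definition PP :: "'a::comm_ring_1 set \<Rightarrow> nat \<Rightarrow> nat \<Rightarrow> 'a list set \<Rightarrow> 'a list set \<Rightarrow> bool" where
  "PP k s t A Y \<longleftrightarrow> (\<exists>n Z. constructible k (s + s * n) Z \<and>
     (\<forall>b\<in>(aspace t :: 'a list set). \<exists>a. length a = n \<and> set a \<subseteq> A \<and> fibre s Y b \<inter> A = fibre s Z (concat a) \<inter> A))"

lemma length_concat_s: "set a \<subseteq> aspace s \<Longrightarrow> length (concat a) = s * length a"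
  by (induction a) (auto simp: aspace_def)

lemma PP_compl:
  assumes "A \<subseteq> aspace s" "PP k s t A Y"
  shows "PP k s t A (aspace (s + t) - Y)"
proof -
  obtain n Z where Z: "constructible k (s + s * n) Z"
    "\<forall>b\<in>(aspace t :: 'a list set). \<exists>a. length a = n \<and> set a \<subseteq> A \<and> fibre s Y b \<inter> A = fibre s Z (concat a) \<inter> A"
    using assms(2) unfolding PP_def by blast
  have "\<forall>b\<in>(aspace t :: 'a list set). \<exists>a. length a = n \<and> set a \<subseteq> A \<and>
      fibre s (aspace (s + t) - Y) b \<inter> A = fibre s (aspace (s + s * n) - Z) (concat a) \<inter> A"
  proof
    fix b :: "'a list" assume b: "b \<in> aspace t"
    then obtain a where a: "length a = n" "set a \<subseteq> A" "fibre s Y b \<inter> A = fibre s Z (concat a) \<inter> A"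
      using Z(2) by blast
    have lc: "length (concat a) = s * n" using a assms(1) length_concat_s by (metis order_trans)
    have "fibre s (aspace (s + t) - Y) b \<inter> A = A - (fibre s Y b \<inter> A)"
      using b assms(1) by (auto simp: fibre_def aspace_def)
    also have "\<dots> = A - (fibre s Z (concat a) \<inter> A)" using a by simp
    also have "\<dots> = fibre s (aspace (s + s * n) - Z) (concat a) \<inter> A"
      using lc assms(1) by (auto simp: fibre_def aspace_def)
    finally show "\<exists>a. length a = n \<and> set a \<subseteq> A \<and>
      fibre s (aspace (s + t) - Y) b \<inter> A = fibre s (aspace (s + s * n) - Z) (concat a) \<inter> A"
      using a by blast
  qed
  then show ?thesis unfolding PP_def using constructible.compl[OF Z(1)] by blast
qed

lemma map_take_eq: "length x = s \<Longrightarrow> length u = m \<Longrightarrow>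
  map (\<lambda>i. (x @ u @ w) ! i) [0..<s + m] = x @ u"
  by (rule nth_equalityI) (auto simp: nth_append)

lemma map_skip_eq: "length x = s \<Longrightarrow> length u = m \<Longrightarrow> length w = l \<Longrightarrow>
  map (\<lambda>i. (x @ u @ w) ! (if i < s then i else i + m)) [0..<s + l] = x @ w"
  by (rule nth_equalityI) (auto simp: nth_append)

lemma PP_union:
  assumes "A \<subseteq> aspace s" "0 \<in> k" "PP k s t A Y1" "PP k s t A Y2"
  shows "PP k s t A (Y1 \<union> Y2)"
proof -
  obtain n1 Z1 where Z1: "constructible k (s + s * n1) Z1"
    "\<forall>b\<in>aspace t. \<exists>a. length a = n1 \<and> set a \<subseteq> A \<and> fibre s Y1 b \<inter> A = fibre s Z1 (concat a) \<inter> A"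
    using assms(3) unfolding PP_def by blast
  obtain n2 Z2 where Z2: "constructible k (s + s * n2) Z2"
    "\<forall>b\<in>aspace t. \<exists>a. length a = n2 \<and> set a \<subseteq> A \<and> fibre s Y2 b \<inter> A = fibre s Z2 (concat a) \<inter> A"
    using assms(4) unfolding PP_def by blast
  define N where "N = s + s * (n1 + n2)"
  define Z1' where "Z1' = {y \<in> aspace N. map (\<lambda>i. y ! i) [0..<s + s * n1] \<in> Z1}"
  define Z2' where "Z2' = {y \<in> aspace N. map (\<lambda>i. y ! (if i < s then i else i + s * n1)) [0..<s + s * n2] \<in> Z2}"
  have c1: "constructible k N Z1'" unfolding Z1'_def
    by (rule cons_pre[OF Z1(1) _ assms(2)]) (auto simp: N_def algebra_simps)
  have c2: "constructible k N Z2'" unfolding Z2'_def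
    by (rule cons_pre[OF Z2(1) _ assms(2)]) (auto simp: N_def algebra_simps)
  have "\<forall>b\<in>(aspace t :: 'a list set). \<exists>a. length a = n1 + n2 \<and> set a \<subseteq> A \<and>
      fibre s (Y1 \<union> Y2) b \<inter> A = fibre s (Z1' \<union> Z2') (concat a) \<inter> A"
  proof
    fix b :: "'a list" assume b: "b \<in> aspace t"
    obtain a1 where a1: "length a1 = n1" "set a1 \<subseteq> A" "fibre s Y1 b \<inter> A = fibre s Z1 (concat a1) \<inter> A"
      using Z1(2) b by blast
    obtain a2 where a2: "length a2 = n2" "set a2 \<subseteq> A" "fibre s Y2 b \<inter> A = fibre s Z2 (concat a2) \<inter> A"
      using Z2(2) b by blast
    have l1: "length (concat a1) = s * n1" using a1 assms(1) length_concat_s by (metis order_trans)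
    have l2: "length (concat a2) = s * n2" using a2 assms(1) length_concat_s by (metis order_trans)
    have "fibre s (Z1' \<union> Z2') (concat (a1 @ a2)) = fibre s Z1 (concat a1) \<union> fibre s Z2 (concat a2)"
    proof -
      have "x @ concat a1 @ concat a2 \<in> Z1' \<longleftrightarrow> x @ concat a1 \<in> Z1" if "length x = s" for x
        unfolding Z1'_def using that l1 l2 map_take_eq[OF that l1, of "concat a2"]
        by (auto simp: aspace_def N_def algebra_simps)
      moreover have "x @ concat a1 @ concat a2 \<in> Z2' \<longleftrightarrow> x @ concat a2 \<in> Z2" if "length x = s" for x
        unfolding Z2'_def using that l1 l2 map_skip_eq[OF that l1 l2]
        by (auto simp: aspace_def N_def algebra_simps)
      ultimately show ?thesis by (auto simp: fibre_def aspace_def)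
    qed
    moreover have "fibre s (Y1 \<union> Y2) b = fibre s Y1 b \<union> fibre s Y2 b"
      by (auto simp: fibre_def)
    ultimately have "fibre s (Y1 \<union> Y2) b \<inter> A = fibre s (Z1' \<union> Z2') (concat (a1 @ a2)) \<inter> A"
      using a1 a2 by blast
    then show "\<exists>a. length a = n1 + n2 \<and> set a \<subseteq> A \<and>
      fibre s (Y1 \<union> Y2) b \<inter> A = fibre s (Z1' \<union> Z2') (concat a) \<inter> A"
      using a1 a2 by (intro exI[of _ "a1 @ a2"]) auto
  qed
  then show ?thesis unfolding PP_def using constructible.union[OF c1 c2] N_def by blast
qed

lemma PP_univ: "PP k s t A (aspace (s + t))"
proof -
  have "constructible k (s + s * 0) (aspace s)" using cons_univ[of k s] by simp
  moreover have "fibre s (aspace (s + t)) b \<inter> A = fibre s (aspace s) (concat []) \<inter> A"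
    if "b \<in> aspace t" for b using that by (auto simp: fibre_def aspace_def)
  ultimately show ?thesis unfolding PP_def by (intro exI[of _ 0] exI[of _ "aspace s"]) auto
qed

lemma PP_Int:
  assumes "A \<subseteq> aspace s" "0 \<in> k" "PP k s t A Y1" "PP k s t A Y2"
    "Y1 \<subseteq> aspace (s + t)" "Y2 \<subseteq> aspace (s + t)"
  shows "PP k s t A (Y1 \<inter> Y2)"
proof -
  have "Y1 \<inter> Y2 = aspace (s + t) - ((aspace (s + t) - Y1) \<union> (aspace (s + t) - Y2))"
    using assms(5,6) by blast
  then show ?thesis using assms by (metis PP_compl PP_union)
qed

lemma PP_closed:
  assumes "A \<subseteq> aspace s" "0 \<in> k"
    "\<And>p. PP k s t A {y \<in> aspace (s + t). mpeval p y = 0}"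
    "zariski_closed K (s + t) Y"
  shows "PP k s t A Y"
proof -
  obtain F where F: "finite F" "Y = {x \<in> aspace (s + t). \<forall>p\<in>F. mpeval p x = 0}"
    using assms(4) unfolding zariski_closed_def by blast
  have "PP k s t A {x \<in> aspace (s + t). \<forall>p\<in>F. mpeval p x = 0}"
    using F(1)
  proof (induction F rule: finite_induct)
    case empty then show ?case using PP_univ[of k s t A] by (simp add: Collect_mem_eq)
  next
    case (insert p F)
    have "{x \<in> aspace (s + t). \<forall>p\<in>insert p F. mpeval p x = 0} =
      {y \<in> aspace (s + t). mpeval p y = 0} \<inter> {x \<in> aspace (s + t). \<forall>p\<in>F. mpeval p x = 0}" by auto
    then show ?case using PP_Int[OF assms(1,2) assms(3) insert.IH] by auto
  qed
  then show ?thesis using F by simp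
qed

lemma PP_cons:
  assumes "A \<subseteq> aspace s" "0 \<in> k"
    "\<And>p. PP k s t A {y \<in> aspace (s + t). mpeval p y = 0}"
    "constructible K (s + t) Y"
  shows "PP k s t A Y"
  using assms(4)
proof (induction rule: constructible.induct)
  case (closed S) then show ?case using PP_closed[OF assms(1-3)] by blast
next
  case (compl S) then show ?case using PP_compl[OF assms(1)] by blast
next
  case (union S T) then show ?case using PP_union[OF assms(1,2)] by blast
qed

fun dec :: "nat \<Rightarrow> 'a::comm_ring_1 mpexpr \<Rightarrow> (('a list \<Rightarrow> 'a) \<times> 'a mpexpr) list" where
  "dec s (Var i) = (if i < s then [(\<lambda>b. 1, Var i)] else [(\<lambda>b. mpeval (Var (i - s)) b, Const 1)])"
| "dec s (Const c) = [(\<lambda>b. c, Const 1)]"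
| "dec s (Add p q) = dec s p @ dec s q"
| "dec s (Mul p q) = concat (map (\<lambda>u. map (\<lambda>v. (\<lambda>b. fst u b * fst v b, Mul (snd u) (snd v))) (dec s q)) (dec s p))"
| "dec s (Neg p) = map (\<lambda>u. (\<lambda>b. - fst u b, snd u)) (dec s p)"

lemma sum_list_prod_aux:
  "(\<Sum>u\<leftarrow>xs. f u) * (\<Sum>v\<leftarrow>ys. g v) = (\<Sum>u\<leftarrow>xs. \<Sum>v\<leftarrow>ys. f u * (g v :: 'a::comm_ring_1))"
  by (induction xs) (auto simp: algebra_simps sum_list_const_mult)

lemma sum_list_concat': "sum_list (concat xss) = sum_list (map sum_list (xss :: 'a::monoid_add list list))"
  by (induction xss) auto

lemma sum_list_neg': "(\<Sum>u\<leftarrow>xs. - f u) = - (\<Sum>u\<leftarrow>xs. f u :: 'a::ab_group_add)"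
  by (induction xs) auto

lemma dec_eval: "length x = s \<Longrightarrow> mpeval p (x @ b) = (\<Sum>u\<leftarrow>dec s p. fst u b * mpeval (snd u) x)"
proof (induction p)
  case (Var i) then show ?case by (auto simp: nth_append)
next
  case (Const c) then show ?case by simp
next
  case (Add p q) then show ?case by simp
next
  case (Mul p q)
  then show ?case
    by (simp add: sum_list_prod_aux sum_list_concat' map_concat o_def algebra_simps)
next
  case (Neg p)
  then show ?case by (simp add: o_def sum_list_neg')
qed

lemma dec_coeffs: "1 \<in> k \<Longrightarrow> u \<in> set (dec s p) \<Longrightarrow> coeffs_in k (snd u)"
  by (induction p arbitrary: u) (auto split: if_splits)

lemma mat_cong': "(\<And>i j. i < n \<Longrightarrow> j < m \<Longrightarrow> f (i,j) = g (i,j)) \<Longrightarrow> mat n m f = mat n m g"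
  by (rule eq_matI) auto

lemma sound:
  fixes col :: "nat \<Rightarrow> nat \<Rightarrow> 'a::field" and v c :: "nat \<Rightarrow> 'a"
  assumes lI: "length I = r"
    and W: "det (mat r r (\<lambda>(i,j). col j (I!i))) \<noteq> 0"
    and B: "\<forall>\<mu><M. det (mat (Suc r) (Suc r) (\<lambda>(i,j). (if j < r then col j else v) ((I@[\<mu>])!i))) = 0"
    and C: "\<forall>j<r. (\<Sum>\<mu><M. c \<mu> * col j \<mu>) = 0"
  shows "(\<Sum>\<mu><M. c \<mu> * v \<mu>) = 0"
proof (rule ccontr)
  assume ne: "(\<Sum>\<mu><M. c \<mu> * v \<mu>) \<noteq> 0"
  define E where "E \<mu> j = (if j < r then col j else v) \<mu>" for \<mu> j
  define N where "N = mat (Suc r) (Suc r) (\<lambda>(i,j). if i < r then E (I!i) j else (\<Sum>\<mu><M. c \<mu> * E \<mu> j))"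
  define P where "P = {p. p permutes {0..<Suc r}}"
  have detB: "det (mat (Suc r) (Suc r) (\<lambda>(i,j). E ((I@[\<mu>])!i) j)) =
     (\<Sum>p\<in>P. signof p * ((\<Prod>i=0..<r. E (I!i) (p i)) * E \<mu> (p r)))" for \<mu>
  proof -
    have "det (mat (Suc r) (Suc r) (\<lambda>(i,j). E ((I@[\<mu>])!i) j)) =
      (\<Sum>p\<in>P. signof p * (\<Prod>i=0..<Suc r. E ((I@[\<mu>])!i) (p i)))"
      unfolding P_def by (subst det_def'[of _ "Suc r"]) (auto intro!: sum.cong prod.cong simp: permutes_in_image)
    also have "\<dots> = (\<Sum>p\<in>P. signof p * ((\<Prod>i=0..<r. E (I!i) (p i)) * E \<mu> (p r)))"
      by (intro sum.cong refl arg_cong2[where f="(*)"]) (auto simp: prod.atLeast0_lessThan_Suc lI nth_append intro!: prod.cong)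
    finally show ?thesis .
  qed
  have "det N = (\<Sum>p\<in>P. signof p * (\<Prod>i=0..<Suc r. N $$ (i, p i)))"
    unfolding P_def by (rule det_def') (simp add: N_def)
  also have "\<dots> = (\<Sum>p\<in>P. signof p * ((\<Prod>i=0..<r. E (I!i) (p i)) * (\<Sum>\<mu><M. c \<mu> * E \<mu> (p r))))"
  proof (intro sum.cong refl arg_cong2[where f="(*)"])
    fix p assume "p \<in> P"
    then have pp: "\<And>i. i < Suc r \<Longrightarrow> p i < Suc r" unfolding P_def by (simp add: permutes_in_image)
    show "(\<Prod>i=0..<Suc r. N $$ (i, p i)) = (\<Prod>i=0..<r. E (I!i) (p i)) * (\<Sum>\<mu><M. c \<mu> * E \<mu> (p r))"
      unfolding prod.atLeast0_lessThan_Suc using pp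
      by (intro arg_cong2[where f="(*)"] prod.cong) (auto simp: N_def)
  qed
  also have "\<dots> = (\<Sum>\<mu><M. c \<mu> * (\<Sum>p\<in>P. signof p * ((\<Prod>i=0..<r. E (I!i) (p i)) * E \<mu> (p r))))"
    by (simp add: sum_distrib_left sum_distrib_right sum.swap[of _ P] mult_ac)
  also have "\<dots> = 0"
  proof (rule sum.neutral, rule ballI)
    fix \<mu> assume "\<mu> \<in> {..<M}"
    then have "det (mat (Suc r) (Suc r) (\<lambda>(i,j). E ((I@[\<mu>])!i) j)) = 0"
      using B unfolding E_def by simp
    then show "c \<mu> * (\<Sum>p\<in>P. signof p * ((\<Prod>i=0..<r. E (I!i) (p i)) * E \<mu> (p r))) = 0"
      using detB by simp
  qed
  finally have "det N = 0" .
  then obtain u where u: "u \<in> carrier_vec (Suc r)" "u \<noteq> 0\<^sub>v (Suc r)" "N *\<^sub>v u = 0\<^sub>v (Suc r)"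
    using det_0_iff_vec_prod_zero_field[of N "Suc r"] by (auto simp: N_def)
  have dimu: "dim_vec u = Suc r" using u(1) by auto
  have rowi: "(\<Sum>j<Suc r. N $$ (i, j) * u $ j) = 0" if "i < Suc r" for i
  proof -
    have "(N *\<^sub>v u) $ i = 0" using u(3) that by simp
    then show ?thesis using that dimu by (simp add: N_def scalar_prod_def atLeast0LessThan)
  qed
  have Nr: "N $$ (r, j) = (if j < r then 0 else (\<Sum>\<mu><M. c \<mu> * v \<mu>))" if "j < Suc r" for j
    using that C by (auto simp: N_def E_def)
  have "(\<Sum>j<Suc r. N $$ (r, j) * u $ j) = (\<Sum>\<mu><M. c \<mu> * v \<mu>) * u $ r"
    using Nr by (simp add: lessThan_Suc_atMost[symmetric] sum.lessThan_Suc)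
  then have ur: "u $ r = 0" using rowi[of r] ne by simp
  define u' where "u' = vec r (\<lambda>j. u $ j)"
  have "u' \<noteq> 0\<^sub>v r"
  proof
    assume "u' = 0\<^sub>v r"
    then have "\<forall>j<r. u $ j = 0" unfolding u'_def by (metis index_vec index_zero_vec(1))
    then have "u = 0\<^sub>v (Suc r)" using ur dimu by (intro eq_vecI) (auto simp: less_Suc_eq)
    then show False using u(2) by simp
  qed
  moreover have "mat r r (\<lambda>(i,j). col j (I!i)) *\<^sub>v u' = 0\<^sub>v r"
  proof (intro eq_vecI)
    fix i assume "i < dim_vec (0\<^sub>v r :: 'a vec)"
    then have i: "i < r" by simp
    have "(\<Sum>j<Suc r. N $$ (i, j) * u $ j) = (\<Sum>j<r. col j (I!i) * u $ j)"
      using i ur by (simp add: sum.lessThan_Suc N_def E_def)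
    then show "(mat r r (\<lambda>(i,j). col j (I!i)) *\<^sub>v u') $ i = 0\<^sub>v r $ i"
      using rowi[of i] i by (simp add: scalar_prod_def u'_def atLeast0LessThan)
  qed simp
  moreover have "u' \<in> carrier_vec r" by (simp add: u'_def)
  ultimately have "det (mat r r (\<lambda>(i,j). col j (I!i))) = 0"
    using det_0_iff_vec_prod_zero_field[of "mat r r (\<lambda>(i,j). col j (I!i))" r] by auto
  then show False using W by simp
qed

definition Wd :: "(nat \<Rightarrow> 'a mpexpr) \<Rightarrow> 'a list list \<Rightarrow> nat list \<Rightarrow> nat \<Rightarrow> 'a::comm_ring_1" where
  "Wd g ws I r = det (mat r r (\<lambda>(i,j). mpeval (g (I!i)) (ws!j)))"

definition Zsem :: "(nat \<Rightarrow> 'a mpexpr) \<Rightarrow> nat \<Rightarrow> 'a list list \<Rightarrow> 'a::comm_ring_1 list \<Rightarrow> bool" where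
  "Zsem g M ws x \<longleftrightarrow> (\<exists>r\<in>{..M}. \<exists>I\<in>{I. set I \<subseteq> {..<M} \<and> length I = r}. Wd g ws I r \<noteq> 0 \<and>
     (\<forall>\<mu>\<in>{..<M}. Wd g (take r ws @ [x]) (I@[\<mu>]) (Suc r) = 0))"

definition wsOf :: "nat \<Rightarrow> nat \<Rightarrow> 'a list \<Rightarrow> 'a list list" where
  "wsOf s M y = map (\<lambda>j. take s (drop (s * (3 + j)) y)) [0..<M]"

definition Zset :: "nat \<Rightarrow> (nat \<Rightarrow> 'a mpexpr) \<Rightarrow> nat \<Rightarrow> 'a::comm_ring_1 list set" where
  "Zset s g M = {y \<in> aspace (s + s * (M + 2)). take s (drop s y) \<noteq> take s (drop (2 * s) y) \<and>
      Zsem g M (wsOf s M y) (take s y)}"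

lemma take_drop_map: "off + s \<le> length y \<Longrightarrow> take s (drop off y) = map (\<lambda>i. y ! (off + i)) [0..<s]"
  by (rule nth_equalityI) auto

lemma kp_col: "coeffs_in k h \<Longrightarrow> 0 \<in> k \<Longrightarrow> off + s \<le> N \<Longrightarrow> kp k N (\<lambda>y. mpeval h (take s (drop off y)))"
  apply (rule kp_cong[OF kp_sub[where \<rho>="\<lambda>i. off + i" and L=s and N=N and g=h and k=k]])
  apply (auto simp: aspace_def take_drop_map)
  done

lemma off_le: "(j::nat) < M \<Longrightarrow> s * (3 + j) + s \<le> s + s * (M + 2)"
proof -
  assume "j < M"
  then have "s * (4 + j) \<le> s * (3 + M)" by (intro mult_le_mono2) simp
  then show ?thesis by (simp add: algebra_simps)
qed

lemma Z_cons:
  assumes g: "\<And>\<mu>. \<mu> < M \<Longrightarrow> coeffs_in k (g \<mu>)" and k: "0 \<in> k" "1 \<in> k" "-1 \<in> k"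
  shows "constructible k (s + s * (M + 2)) (Zset s g M)"
proof -
  define NN where "NN = s + s * (M + 2)"
  have col: "wsOf s M y ! j = take s (drop (s * (3 + j)) y)" if "j < M" for y j
    using that by (simp add: wsOf_def)
  have kW: "kp k NN (\<lambda>y. Wd g (wsOf s M y) I r)" if "r \<le> M" "set I \<subseteq> {..<M}" "length I = r" for I r
    unfolding Wd_def
  proof (rule kp_det[OF _ k])
    fix i j assume ij: "i < r" "j < r"
    then have gI: "I ! i < M" using that nth_mem by blast
    have jM: "j < M" using ij that by simp
    have "kp k NN (\<lambda>y. mpeval (g (I!i)) (take s (drop (s*(3+j)) y)))"
      by (rule kp_col[OF g[OF gI] k(1)]) (use off_le[OF jM, of s] in \<open>simp add: NN_def\<close>)
    then show "kp k NN (\<lambda>y. mpeval (g (I!i)) (wsOf s M y ! j))"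
      by (rule kp_cong) (simp add: col[OF jM])
  qed
  have kB: "kp k NN (\<lambda>y. Wd g (take r (wsOf s M y) @ [take s y]) (I@[\<mu>]) (Suc r))"
    if "r \<le> M" "set I \<subseteq> {..<M}" "length I = r" "\<mu> < M" for I r \<mu>
    unfolding Wd_def
  proof (rule kp_det[OF _ k])
    fix i j assume ij: "i < Suc r" "j < Suc r"
    then have gi: "(I@[\<mu>]) ! i < M" using that nth_mem by (auto simp: nth_append)
    show "kp k NN (\<lambda>y. mpeval (g ((I@[\<mu>])!i)) ((take r (wsOf s M y) @ [take s y]) ! j))"
    proof (cases "j < r")
      case True
      then have jM: "j < M" using that by simp
      have "kp k NN (\<lambda>y. mpeval (g ((I@[\<mu>])!i)) (take s (drop (s*(3+j)) y)))"
        by (rule kp_col[OF g[OF gi] k(1)]) (use off_le[OF jM, of s] in \<open>simp add: NN_def\<close>)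
      then show ?thesis
        by (rule kp_cong) (use True that in \<open>simp add: nth_append wsOf_def\<close>)
    next
      case False
      then have "j = r" using ij by simp
      have "kp k NN (\<lambda>y. mpeval (g ((I@[\<mu>])!i)) (take s (drop 0 y)))"
        by (rule kp_col[OF g[OF gi] k(1)]) (simp add: NN_def)
      then show ?thesis
        by (rule kp_cong) (use \<open>j = r\<close> that in \<open>simp add: nth_append wsOf_def\<close>)
    qed
  qed
  have eq: "Zset s g M = {y \<in> aspace NN. \<not> (\<forall>j\<in>{..<s}. y ! (s + j) - y ! (2 * s + j) = 0) \<and>
     (\<exists>r\<in>{..M}. \<exists>I\<in>{I. set I \<subseteq> {..<M} \<and> length I = r}. \<not> (Wd g (wsOf s M y) I r = 0) \<and>
     (\<forall>\<mu>\<in>{..<M}. Wd g (take r (wsOf s M y) @ [take s y]) (I@[\<mu>]) (Suc r) = 0))}"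
  proof -
    have "take s (drop s y) \<noteq> take s (drop (2 * s) y) \<longleftrightarrow> \<not> (\<forall>j\<in>{..<s}. y ! (s + j) - y ! (2 * s + j) = 0)"
      if "y \<in> aspace NN" for y :: "'a list"
    proof -
      have l: "2 * s + s \<le> length y" "s + s \<le> length y" using that by (auto simp: aspace_def NN_def)
      show ?thesis unfolding take_drop_map[OF l(1)] take_drop_map[OF l(2)] by (auto simp: atLeast0LessThan)
    qed
    then show ?thesis unfolding Zset_def Zsem_def NN_def by auto
  qed
  show ?thesis
    unfolding eq NN_def[symmetric]
    apply (intro cons_conj cons_not cons_all cons_zero kp_diff kp_var cons_ex finite_lists_length_eq)
    apply (auto intro!: kW kB)
    apply (auto simp: NN_def)
    done
qed

lemma block_nth: "\<forall>z\<in>set ws. length z = s \<Longrightarrow> j < length ws \<Longrightarrow> take s (drop (s * j) (concat ws)) = ws ! j"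
proof (induction ws arbitrary: j)
  case Nil then show ?case by simp
next
  case (Cons z ws)
  show ?case
  proof (cases j)
    case 0 then show ?thesis using Cons by simp
  next
    case (Suc j')
    have "drop (s * j) (concat (z # ws)) = drop (s * j') (concat ws)"
      using Cons Suc by simp
    then show ?thesis using Cons Suc by simp
  qed
qed

lemma wsOf_decode:
  assumes "length x = s" "length e1 = s" "length e2 = s" "\<forall>z\<in>set ws. length z = s" "length ws = M"
  shows "wsOf s M (x @ e1 @ e2 @ concat ws) = ws"
proof (rule nth_equalityI)
  show "length (wsOf s M (x @ e1 @ e2 @ concat ws)) = length ws" using assms by (simp add: wsOf_def)
next
  fix j assume "j < length (wsOf s M (x @ e1 @ e2 @ concat ws))"
  then have j: "j < M" by (simp add: wsOf_def)
  have "drop (s * (3 + j)) (x @ e1 @ e2 @ concat ws) = drop (s * j) (concat ws)"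
  proof -
    have "x @ e1 @ e2 @ concat ws = (x @ e1 @ e2) @ concat ws" by simp
    moreover have "s * (3 + j) = length (x @ e1 @ e2) + s * j" using assms by (simp add: algebra_simps)
    ultimately show ?thesis by (simp only:) simp
  qed
  moreover have "wsOf s M (x @ e1 @ e2 @ concat ws) ! j = take s (drop (s * (3 + j)) (x @ e1 @ e2 @ concat ws))"
    using j by (simp add: wsOf_def)
  ultimately show "wsOf s M (x @ e1 @ e2 @ concat ws) ! j = ws ! j"
    using j assms block_nth[of ws s j] by simp
qed

lemma sum_list_map_nth: "sum_list (map f xs) = (\<Sum>i<length xs. f (xs ! i))"
proof -
  have "sum_list (map f xs) = (\<Sum>i=0..<length (map f xs). map f xs ! i)" by (rule sum_list_sum_nth)
  also have "\<dots> = (\<Sum>i=0..<length xs. f (xs ! i))" by (intro sum.cong) auto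
  finally show ?thesis by (simp add: atLeast0LessThan)
qed

lemma PP_hyper:
  fixes k :: "'a::field set"
  assumes A: "A \<subseteq> aspace s" "\<alpha> \<in> A" "\<beta> \<in> A" "\<alpha> \<noteq> \<beta>" and k: "0 \<in> k" "1 \<in> k" "-1 \<in> k"
  shows "PP k s t A {y \<in> aspace (s + t). mpeval p y = 0}"
proof -
  define D where "D = dec s p"
  define M where "M = length D"
  define g where "g \<mu> = snd (D ! \<mu>)" for \<mu>
  define cf where "cf \<mu> b = fst (D ! \<mu>) b" for \<mu> b
  have gc: "coeffs_in k (g \<mu>)" if "\<mu> < M" for \<mu>
    using dec_coeffs[OF k(2), of "D ! \<mu>" s p] that nth_mem[of \<mu> D] by (simp add: g_def M_def D_def)
  have ev: "mpeval p (x @ b) = (\<Sum>\<mu><M. cf \<mu> b * mpeval (g \<mu>) x)" if "length x = s" for x b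
    using dec_eval[OF that, of p b] by (simp add: sum_list_map_nth D_def M_def g_def cf_def)
  define Z where "Z = Zset s g M"
  have cZ: "constructible k (s + s * (M + 2)) Z" using Z_cons[OF gc k] by (simp add: Z_def)
  have lenA: "length x = s" if "x \<in> A" for x using that A(1) by (auto simp: aspace_def)
  have decode: "x @ concat (e1 # e2 # ws) \<in> Z \<longleftrightarrow> e1 \<noteq> e2 \<and> Zsem g M ws x"
    if "length x = s" "e1 \<in> A" "e2 \<in> A" "set ws \<subseteq> A" "length ws = M" for x e1 e2 ws
  proof -
    have l: "length e1 = s" "length e2 = s" "\<forall>z\<in>set ws. length z = s" using that lenA by auto
    have lc: "length (concat ws) = s * M" using that A(1) length_concat_s by (metis order_trans)
    have y: "x @ concat (e1 # e2 # ws) \<in> aspace (s + s * (M + 2))"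
      using l lc that by (simp add: aspace_def algebra_simps)
    have t1: "take s (drop s (x @ e1 @ e2 @ concat ws)) = e1" using l that by simp
    have t2: "take s (drop (2 * s) (x @ e1 @ e2 @ concat ws)) = e2" using l that by simp
    have t0: "take s (x @ e1 @ e2 @ concat ws) = x" using that by simp
    have w: "wsOf s M (x @ e1 @ e2 @ concat ws) = ws" using wsOf_decode[OF that(1) l that(5)] .
    show ?thesis using y t0 t1 t2 w unfolding Z_def Zset_def by simp
  qed
  show ?thesis unfolding PP_def
  proof (intro exI[of _ "M + 2"] exI[of _ Z] conjI cZ ballI)
    fix b :: "'a list" assume b: "b \<in> aspace t"
    define S where "S = {x \<in> A. (\<Sum>\<mu><M. cf \<mu> b * mpeval (g \<mu>) x) = 0}"
    have SA: "S \<subseteq> A" by (auto simp: S_def)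
    have fibH: "fibre s {y \<in> aspace (s + t). mpeval p y = 0} b \<inter> A = S"
    proof (rule Set.set_eqI)
      fix x
      show "x \<in> fibre s {y \<in> aspace (s + t). mpeval p y = 0} b \<inter> A \<longleftrightarrow> x \<in> S"
      proof (cases "x \<in> A")
        case True
        then have lx: "length x = s" by (rule lenA)
        have "x @ b \<in> aspace (s + t)" "x \<in> aspace s" using lx b by (simp_all add: aspace_def)
        then show ?thesis using True ev[OF lx, of b] by (simp add: fibre_def S_def)
      next
        case False then show ?thesis by (simp add: S_def)
      qed
    qed
    show "\<exists>a. length a = M + 2 \<and> set a \<subseteq> A \<and>
       fibre s {y \<in> aspace (s + t). mpeval p y = 0} b \<inter> A = fibre s Z (concat a) \<inter> A"
    proof (cases "S = {}")
      case True
      have "x \<notin> fibre s Z (concat (\<alpha> # \<alpha> # replicate M \<alpha>))" if "x \<in> A" for x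
      proof -
        have "set (replicate M \<alpha>) \<subseteq> A" using A(2) by (simp add: set_replicate_conv_if)
        from decode[OF lenA[OF that] A(2) A(2) this length_replicate]
        show ?thesis by (simp add: fibre_def)
      qed
      then have emp: "fibre s Z (concat (\<alpha> # \<alpha> # replicate M \<alpha>)) \<inter> A = {}" by blast
      have "set (\<alpha> # \<alpha> # replicate M \<alpha>) \<subseteq> A" using A(2) by (simp add: set_replicate_conv_if)
      moreover have "length (\<alpha> # \<alpha> # replicate M \<alpha>) = M + 2" by simp
      ultimately show ?thesis using True fibH emp by blast
    next
      case False
      then obtain s0 where s0: "s0 \<in> S" by blast
      define R where "R = {r. r \<le> M \<and> (\<exists>ws I. length ws = r \<and> set ws \<subseteq> S \<and> length I = r \<and>
          distinct I \<and> set I \<subseteq> {..<M} \<and> Wd g ws I r \<noteq> 0)}"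
      have finR: "finite R" by (rule finite_subset[of _ "{..M}"]) (auto simp: R_def)
      have R0: "0 \<in> R" unfolding R_def Wd_def by (auto intro!: exI[of _ "[]"])
      define r0 where "r0 = Max R"
      have r0R: "r0 \<in> R" using finR R0 unfolding r0_def by (intro Max_in) auto
      have r0max: "r \<le> r0" if "r \<in> R" for r using finR that by (simp add: r0_def)
      obtain ws0 I0 where w0: "r0 \<le> M" "length ws0 = r0" "set ws0 \<subseteq> S" "length I0 = r0" "distinct I0"
          "set I0 \<subseteq> {..<M}" "Wd g ws0 I0 r0 \<noteq> 0"
        using r0R unfolding R_def by blast
      define ws where "ws = ws0 @ replicate (M - r0) s0"
      have ws: "length ws = M" "set ws \<subseteq> S" "take r0 ws = ws0" using w0 s0 by (auto simp: ws_def)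
      have Wws: "Wd g ws I0 r0 = Wd g ws0 I0 r0"
        unfolding Wd_def by (rule arg_cong[where f=det], rule mat_cong') (auto simp: ws_def nth_append w0(2))
      have key: "Zsem g M ws x \<longleftrightarrow> x \<in> S" if "x \<in> A" for x
      proof
        assume "Zsem g M ws x"
        then obtain r I where rI: "r \<le> M" "set I \<subseteq> {..<M}" "length I = r" "Wd g ws I r \<noteq> 0"
          "\<forall>\<mu><M. Wd g (take r ws @ [x]) (I@[\<mu>]) (Suc r) = 0" unfolding Zsem_def by auto
        have h1: "det (mat r r (\<lambda>(i,j). (\<lambda>j \<mu>. mpeval (g \<mu>) (ws!j)) j (I!i))) \<noteq> 0"
          using rI(4) by (simp add: Wd_def)
        have h2: "\<forall>\<mu><M. det (mat (Suc r) (Suc r) (\<lambda>(i,j). (if j < r then (\<lambda>j \<mu>. mpeval (g \<mu>) (ws!j)) j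
            else (\<lambda>\<mu>. mpeval (g \<mu>) x)) ((I@[\<mu>])!i))) = 0"
        proof (intro allI impI)
          fix \<mu> assume "\<mu> < M"
          then have "Wd g (take r ws @ [x]) (I@[\<mu>]) (Suc r) = 0" using rI(5) by simp
          moreover have "mat (Suc r) (Suc r) (\<lambda>(i,j). mpeval (g ((I@[\<mu>])!i)) ((take r ws @ [x])!j)) =
             mat (Suc r) (Suc r) (\<lambda>(i,j). (if j < r then (\<lambda>j \<mu>. mpeval (g \<mu>) (ws!j)) j
            else (\<lambda>\<mu>. mpeval (g \<mu>) x)) ((I@[\<mu>])!i))"
            by (rule mat_cong') (use rI ws in \<open>auto simp: nth_append min_def\<close>)
          ultimately show "det (mat (Suc r) (Suc r) (\<lambda>(i,j). (if j < r then (\<lambda>j \<mu>. mpeval (g \<mu>) (ws!j)) j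
            else (\<lambda>\<mu>. mpeval (g \<mu>) x)) ((I@[\<mu>])!i))) = 0" by (simp add: Wd_def)
        qed
        have h3: "\<forall>j<r. (\<Sum>\<mu><M. cf \<mu> b * (\<lambda>j \<mu>. mpeval (g \<mu>) (ws!j)) j \<mu>) = 0"
        proof (intro allI impI)
          fix j assume "j < r"
          then have "ws ! j \<in> S" using ws rI(1) nth_mem[of j ws] by auto
          then show "(\<Sum>\<mu><M. cf \<mu> b * (\<lambda>j \<mu>. mpeval (g \<mu>) (ws!j)) j \<mu>) = 0" by (simp add: S_def)
        qed
        have "(\<Sum>\<mu><M. cf \<mu> b * mpeval (g \<mu>) x) = 0"
          using sound[OF rI(3) h1 h2 h3] by simp
        then show "x \<in> S" using that by (simp add: S_def)
      next
        assume xS: "x \<in> S"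
        have B0: "Wd g (ws0 @ [x]) (I0@[\<mu>]) (Suc r0) = 0" if \<mu>: "\<mu> < M" for \<mu>
        proof (cases "\<mu> \<in> set I0")
          case True
          then obtain i0 where i0: "i0 < r0" "I0 ! i0 = \<mu>" using w0(4) by (metis in_set_conv_nth)
          have e: "(I0@[\<mu>]) ! i0 = \<mu>" "(I0@[\<mu>]) ! r0 = \<mu>" using i0 w0(4) by (simp_all add: nth_append)
          have i0': "i0 < Suc r0" "r0 < Suc r0" "i0 \<noteq> r0" using i0 by simp_all
          have "row (mat (Suc r0) (Suc r0) (\<lambda>(i,j). mpeval (g ((I0@[\<mu>])!i)) ((ws0 @ [x])!j))) i0 =
                row (mat (Suc r0) (Suc r0) (\<lambda>(i,j). mpeval (g ((I0@[\<mu>])!i)) ((ws0 @ [x])!j))) r0"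
            using i0' by (simp add: e)
          then show ?thesis unfolding Wd_def
            by (rule det_identical_rows[OF mat_carrier i0'(3) i0'(1) i0'(2)])
        next
          case False
          show ?thesis
          proof (rule ccontr)
            assume ne: "Wd g (ws0 @ [x]) (I0@[\<mu>]) (Suc r0) \<noteq> 0"
            have dI: "distinct (I0@[\<mu>])" using False w0(5) by simp
            have sI: "set (I0@[\<mu>]) \<subseteq> {..<M}" using w0(6) \<mu> by simp
            have "card (set (I0@[\<mu>])) \<le> card {..<M}" using sI by (intro card_mono) auto
            then have "Suc r0 \<le> M" using distinct_card[OF dI] w0(4) by simp
            moreover have "length (ws0 @ [x]) = Suc r0" "set (ws0 @ [x]) \<subseteq> S" "length (I0 @ [\<mu>]) = Suc r0"
              using w0(2,3,4) xS by simp_all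
            ultimately have "Suc r0 \<in> R" unfolding R_def using ne dI sI by blast
            then show False using r0max by fastforce
          qed
        qed
        have "Wd g ws I0 r0 \<noteq> 0" using Wws w0(7) by simp
        moreover have "\<forall>\<mu>\<in>{..<M}. Wd g (take r0 ws @ [x]) (I0@[\<mu>]) (Suc r0) = 0" using B0 ws(3) by simp
        moreover have "I0 \<in> {I. set I \<subseteq> {..<M} \<and> length I = r0}" using w0 by simp
        moreover have "r0 \<in> {..M}" using w0 by simp
        ultimately show "Zsem g M ws x" unfolding Zsem_def by blast
      qed
      have wsA: "set ws \<subseteq> A" using ws SA by auto
      have "x \<in> fibre s Z (concat (\<alpha> # \<beta> # ws)) \<inter> A \<longleftrightarrow> x \<in> S" for x
      proof (cases "x \<in> A")
        case True
        have "x \<in> aspace s" using lenA[OF True] by (simp add: aspace_def)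
        then show ?thesis using decode[OF lenA[OF True] A(2) A(3) wsA ws(1)] key[OF True] A(4) True
          by (simp add: fibre_def)
      next
        case False then show ?thesis using SA by blast
      qed
      then have "fibre s Z (concat (\<alpha> # \<beta> # ws)) \<inter> A = S" by blast
      moreover have "set (\<alpha> # \<beta> # ws) \<subseteq> A" "length (\<alpha> # \<beta> # ws) = M + 2" using wsA A ws by simp_all
      ultimately show ?thesis using fibH by blast
    qed
  qed
qed

theorem lemma6p2:
  fixes k :: "'a::field set" and s t :: nat
    and Y :: "'a list set" and A :: "'a list set"
  assumes "subfield k" and "alg_closed_in k" and "alg_closed_in (UNIV :: 'a set)"
    and "constructible UNIV (s + t) Y"
    and "A \<subseteq> aspace s"
    and "\<alpha> \<in> A" and "\<beta> \<in> A"
    and "\<forall>m i j. 1 \<le> i \<and> i \<le> m \<and> 1 \<le> j \<and> j \<le> m \<and> i \<noteq> j \<longrightarrow>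
           ptuple m i \<alpha> \<beta> \<notin> zariski_closure_pt k (s * m) (ptuple m j \<alpha> \<beta>)"
  shows "\<exists>n Z. constructible k (s + s * n) Z \<and>
           (\<forall>b \<in> aspace t. \<exists>a. length a = n \<and> set a \<subseteq> A \<and>
              fibre s Y b \<inter> A = fibre s Z (concat a) \<inter> A)"
proof -
  have k0: "0 \<in> k" "1 \<in> k" "-1 \<in> k" using assms(1) unfolding subfield_def by auto
  have ab: "\<alpha> \<noteq> \<beta>"
  proof
    assume eq: "\<alpha> = \<beta>"
    have "ptuple 2 1 \<alpha> \<beta> = ptuple 2 2 \<alpha> \<beta>" using eq by (simp add: ptuple_def upt_rec)
    moreover have "ptuple 2 2 \<alpha> \<beta> \<in> zariski_closure_pt k (s * 2) (ptuple 2 2 \<alpha> \<beta>)"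
      by (simp add: zariski_closure_pt_def)
    moreover have "ptuple 2 1 \<alpha> \<beta> \<notin> zariski_closure_pt k (s * 2) (ptuple 2 2 \<alpha> \<beta>)"
      using assms(8)[rule_format, of 1 2 2] by simp
    ultimately show False by simp
  qed
  have "PP k s t A Y"
    by (rule PP_cons[OF assms(5) k0(1) PP_hyper[OF assms(5) assms(6) assms(7) ab k0] assms(4)])
  then show ?thesis unfolding PP_def by blast
qed

end
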